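(* Let $X$ be a complex Banach space with open unit ball $B$, let $H(B)$ be a uniform algebra with $A_u(B)\subseteq H(B)\subseteq H^\infty(B)$, let $x_0^{**}\in\bar B^{**}$ and $f\in H(B)$. If $\hat f$ is constant on the fiber $M_{x_0^{**}}$, then $f$ extends to a norm-continuous function $f_0$ on $B\cup\{x_0^{**}\}$ which is $w(X^{**},X^* )$-continuous at $x_0^{**}$ (i.e. $f(x_\alpha)\to f_0(x_0^{**})$ for every net $(x_\alpha)\subset B$ weak-star converging to $x_0^{**}$).
   Context: $H^\infty(B)$: bounded holomorphic functions on $B$ with sup norm; $A_u(B)$: uniformly continuous holomorphic functions on $B$; a uniform algebra between them is a closed unital subalgebra of $H^\infty(B)$ containing $A_u(B)$. $M_{H(B)}$ is its spectrum (weak-star topology), $\hat f$ the Gelfand transform. $\bar B^{**}$ is the closed unit ball of $X^{**}$. The (original) fiber over $x^{**}\in\bar B^{**}$ is $M_{x^{**}}=\pi^{-1}(x^{**})$, where $\pi:M_{H(B)}\to\bar B^{**}$, $\pi(\tau)=\tau|_{X^*}$ (identifying a point of $\bar B^{**}$ with the character $L\mapsto x^{**}(L)$ on $X^*$), i.e. $M_{x^{**}}=\{\tau\in M_{H(B)}:\tau(L)=x^{**}(L)\ \forall L\in X^*\}$. *)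

theory Defs
  imports "HOL-Analysis.Analysis"
begin

text \<open>A complex Banach space is modelled as a real Banach space (type class banach)
  together with a complex structure J (multiplication by i).\<close>

definition cscale :: "('a::real_vector \<Rightarrow> 'a) \<Rightarrow> complex \<Rightarrow> 'a \<Rightarrow> 'a" where
  "cscale J c x = Re c *\<^sub>R x + Im c *\<^sub>R J x"

definition complex_structure :: "('a::real_normed_vector \<Rightarrow> 'a) \<Rightarrow> bool" where
  "complex_structure J \<longleftrightarrow> linear J \<and> (\<forall>x. J (J x) = - x) \<and>
     (\<forall>c x. norm (cscale J c x) = cmod c * norm x)"

abbreviation unitB :: "'a::real_normed_vector set" where
  "unitB \<equiv> ball 0 1"

definition cdual :: "('a::real_normed_vector \<Rightarrow> 'a) \<Rightarrow> ('a \<Rightarrow> complex) set" where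
  "cdual J = {L. (\<forall>x y. L (x + y) = L x + L y) \<and> (\<forall>c x. L (cscale J c x) = c * L x)
                 \<and> (\<exists>K. \<forall>x. cmod (L x) \<le> K * norm x)}"

text \<open>Closed unit ball of X**: complex-linear functionals on X* of norm at most 1
  (taken extensionally zero outside X*).\<close>
definition bidual_ball :: "('a::real_normed_vector \<Rightarrow> 'a) \<Rightarrow> (('a \<Rightarrow> complex) \<Rightarrow> complex) set" where
  "bidual_ball J = {\<Phi>. (\<forall>L\<in>cdual J. \<forall>M\<in>cdual J. \<Phi> (\<lambda>x. L x + M x) = \<Phi> L + \<Phi> M)
      \<and> (\<forall>c. \<forall>L\<in>cdual J. \<Phi> (\<lambda>x. c * L x) = c * \<Phi> L)
      \<and> (\<forall>L\<in>cdual J. \<forall>K\<ge>0. (\<forall>x. cmod (L x) \<le> K * norm x) \<longrightarrow> cmod (\<Phi> L) \<le> K)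
      \<and> (\<forall>L. L \<notin> cdual J \<longrightarrow> \<Phi> L = 0)}"

definition holo :: "('a::real_normed_vector \<Rightarrow> 'a) \<Rightarrow> 'a set \<Rightarrow> ('a \<Rightarrow> complex) \<Rightarrow> bool" where
  "holo J U f \<longleftrightarrow> (\<forall>x\<in>U. \<exists>D. (f has_derivative D) (at x) \<and> (\<forall>c y. D (cscale J c y) = c * D y))"

text \<open>Functions on B are represented extensionally (value 0 outside B).\<close>
definition Hinf :: "('a::real_normed_vector \<Rightarrow> 'a) \<Rightarrow> ('a \<Rightarrow> complex) set" where
  "Hinf J = {f. holo J unitB f \<and> bounded (f ` unitB) \<and> (\<forall>x. x \<notin> unitB \<longrightarrow> f x = 0)}"

definition Au :: "('a::real_normed_vector \<Rightarrow> 'a) \<Rightarrow> ('a \<Rightarrow> complex) set" where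
  "Au J = {f \<in> Hinf J. uniformly_continuous_on unitB f}"

definition restrB :: "('a::real_normed_vector \<Rightarrow> complex) \<Rightarrow> 'a \<Rightarrow> complex" where
  "restrB g = (\<lambda>x. if x \<in> unitB then g x else 0)"

definition uniform_algebra_between :: "('a::real_normed_vector \<Rightarrow> 'a) \<Rightarrow> ('a \<Rightarrow> complex) set \<Rightarrow> bool" where
  "uniform_algebra_between J H \<longleftrightarrow> Au J \<subseteq> H \<and> H \<subseteq> Hinf J
     \<and> (\<forall>f\<in>H. \<forall>g\<in>H. (\<lambda>x. f x + g x) \<in> H \<and> (\<lambda>x. f x * g x) \<in> H)
     \<and> (\<forall>c. \<forall>f\<in>H. (\<lambda>x. c * f x) \<in> H)
     \<and> restrB (\<lambda>_. 1) \<in> H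
     \<and> (\<forall>g\<in>Hinf J. (\<forall>e>0. \<exists>f\<in>H. \<forall>x\<in>unitB. cmod (f x - g x) < e) \<longrightarrow> g \<in> H)"

definition spectrumH :: "('a::real_normed_vector \<Rightarrow> complex) set \<Rightarrow> (('a \<Rightarrow> complex) \<Rightarrow> complex) set" where
  "spectrumH H = {\<tau>. (\<forall>f\<in>H. \<forall>g\<in>H. \<tau> (\<lambda>x. f x + g x) = \<tau> f + \<tau> g
                        \<and> \<tau> (\<lambda>x. f x * g x) = \<tau> f * \<tau> g)
      \<and> (\<forall>c. \<forall>f\<in>H. \<tau> (\<lambda>x. c * f x) = c * \<tau> f)
      \<and> \<tau> (restrB (\<lambda>_. 1)) = 1
      \<and> (\<forall>f. f \<notin> H \<longrightarrow> \<tau> f = 0)}"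

definition fiber :: "('a::real_normed_vector \<Rightarrow> 'a) \<Rightarrow> ('a \<Rightarrow> complex) set \<Rightarrow> (('a \<Rightarrow> complex) \<Rightarrow> complex)
                     \<Rightarrow> (('a \<Rightarrow> complex) \<Rightarrow> complex) set" where
  "fiber J H \<Phi> = {\<tau> \<in> spectrumH H. \<forall>L\<in>cdual J. \<tau> (restrB L) = \<Phi> L}"

definition gelfand :: "('a \<Rightarrow> complex) \<Rightarrow> (('a \<Rightarrow> complex) \<Rightarrow> complex) \<Rightarrow> complex" where
  "gelfand f \<tau> = \<tau> f"

end

theory Submission imports Defs begin
definition ultra :: "'a filter \<Rightarrow> bool" where
  "ultra U \<longleftrightarrow> U \<noteq> bot \<and> (\<forall>P. eventually P U \<or> eventually (\<lambda>x. \<not> P x) U)"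

lemma max_ultra:
  assumes "F \<noteq> bot" and max: "\<And>G. G \<noteq> bot \<Longrightarrow> G \<le> F \<Longrightarrow> F = G"
  shows "ultra F"
  unfolding ultra_def
proof (intro conjI allI assms(1) disjCI)
  fix P assume "\<not> (\<forall>\<^sub>Fx in F. \<not> P x)"
  then have "inf F (principal {x. P x}) \<noteq> bot"
    by (simp add: trivial_limit_def eventually_inf_principal not_eventually)
  then have F: "F = inf F (principal {x. P x})" by (rule max) simp
  show "eventually P F" by (subst F) (simp add: eventually_inf_principal)
qed

lemma ex_ultra:
  fixes F :: "'a filter"
  assumes F: "F \<noteq> bot"
  shows "\<exists>U\<le>F. ultra U"
proof -
  let ?X = "{G. G \<noteq> bot \<and> G \<le> F}"
  let ?R = "{(b, a). a \<noteq> bot \<and> a \<le> b \<and> b \<le> F}"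
  have bot_notin_R: "c \<in> Chains ?R \<Longrightarrow> bot \<notin> c" for c
    by (auto simp: Chains_def)
  have [simp]: "Field ?R = ?X"
    by (auto simp: Field_def bot_unique)
  have "\<exists>m\<in>Field ?R. \<forall>a\<in>Field ?R. (m, a) \<in> ?R \<longrightarrow> a = m" (is "\<exists>m\<in>?A. ?B m")
  proof (rule Zorns_po_lemma)
    show "Partial_order ?R"
      by (auto simp: partial_order_on_def preorder_on_def
          antisym_def refl_on_def trans_def Field_def bot_unique)
    show "\<exists>u\<in>Field ?R. \<forall>a\<in>C. (a, u) \<in> ?R" if C: "C \<in> Chains ?R" for C
    proof (simp, intro exI conjI ballI)
      have Inf_C: "Inf C \<noteq> bot" "Inf C \<le> F" if "C \<noteq> {}"
      proof -
        from C that have "Inf C = bot \<longleftrightarrow> (\<exists>x\<in>C. x = bot)"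
          unfolding trivial_limit_def by (intro eventually_Inf_base) (auto simp: Chains_def)
        with C show "Inf C \<noteq> bot"
          by (simp add: bot_notin_R)
        from that obtain x where "x \<in> C" by auto
        with C show "Inf C \<le> F"
          by (auto intro!: Inf_lower2[of x] simp: Chains_def)
      qed
      then have [simp]: "inf F (Inf C) = (if C = {} then F else Inf C)"
        using C by (auto simp add: inf_absorb2)
      from C show "inf F (Inf C) \<noteq> bot"
        by (simp add: F Inf_C)
      from C show "inf F (Inf C) \<le> F"
        by (simp add: Chains_def Inf_C F)
      with C show "inf F (Inf C) \<le> x" "x \<le> F" if "x \<in> C" for x
        using that  by (auto intro: Inf_lower simp: Chains_def)
    qed
  qed
  then obtain U where U: "U \<in> ?A" "?B U" ..
  show ?thesis
  proof (intro exI conjI)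
    from U show "U \<le> F" by auto
    from U show "ultra U" by (auto intro!: max_ultra)
  qed
qed

lemma ultra_lim:
  fixes g :: "'a \<Rightarrow> complex"
  assumes U: "ultra U" and ev: "eventually (\<lambda>x. x \<in> A) U" and b: "bounded (g ` A)"
  shows "\<exists>l. (g \<longlongrightarrow> l) U"
proof -
  obtain K where K: "\<And>y. y \<in> g ` A \<Longrightarrow> norm y \<le> K" using b bounded_iff by metis
  have ev2: "eventually (\<lambda>y. y \<in> cball 0 K) (filtermap g U)"
    unfolding eventually_filtermap using ev by (rule eventually_mono) (use K in auto)
  have nb: "filtermap g U \<noteq> bot" using U by (simp add: ultra_def filtermap_bot_iff)
  obtain l where "inf (nhds l) (filtermap g U) \<noteq> bot"
    using compact_cball[of "0::complex" K, unfolded compact_filter] ev2 nb by blast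
  have "(g \<longlongrightarrow> l) U"
    unfolding tendsto_def
  proof (intro allI impI)
    fix S assume S: "open S" "l \<in> S"
    show "eventually (\<lambda>x. g x \<in> S) U"
    proof (rule ccontr)
      assume "\<not> ?thesis"
      with U have "eventually (\<lambda>x. g x \<notin> S) U" unfolding ultra_def by blast
      hence "eventually (\<lambda>y. y \<notin> S) (filtermap g U)" by (simp add: eventually_filtermap)
      moreover have "eventually (\<lambda>y. y \<in> S) (nhds l)" using S eventually_nhds by blast
      ultimately have "eventually (\<lambda>y. False) (inf (nhds l) (filtermap g U))"
        unfolding eventually_inf by blast
      with \<open>inf (nhds l) (filtermap g U) \<noteq> bot\<close> show False by (simp add: trivial_limit_def)
    qed
  qed
  thus ?thesis by blast
qed

lemma cdual_bl:
  assumes "L \<in> cdual J"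
  shows "bounded_linear L"
proof -
  from assms have add: "\<And>x y. L (x + y) = L x + L y"
    and sc: "\<And>c x. L (cscale J c x) = c * L x"
    and bd: "\<exists>K. \<forall>x. cmod (L x) \<le> K * norm x" unfolding cdual_def by auto
  have *: "L (r *\<^sub>R x) = r *\<^sub>R L x" for r x
    using sc[of "complex_of_real r" x] by (simp add: cscale_def scaleR_conv_of_real)
  obtain K where K: "\<And>x. cmod (L x) \<le> K * norm x" using bd by blast
  show ?thesis using add K by (intro bounded_linear_intro[where K=K])
     (auto simp: mult.commute *)
qed

lemma restrB_Au:
  assumes "L \<in> cdual J"
  shows "restrB L \<in> Au J"
proof -
  have bl: "bounded_linear L" by (rule cdual_bl[OF assms])
  from assms have sc: "\<And>c x. L (cscale J c x) = c * L x"
    and bd: "\<exists>K. \<forall>x. cmod (L x) \<le> K * norm x" unfolding cdual_def by auto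
  obtain K where K: "\<And>x. cmod (L x) \<le> K * norm x" using bd by blast
  have eq: "\<And>x. x \<in> unitB \<Longrightarrow> restrB L x = L x" by (simp add: restrB_def)
  have "holo J unitB (restrB L)"
    unfolding holo_def
  proof
    fix x :: 'a assume x: "x \<in> unitB"
    have "(restrB L has_derivative L) (at x)"
      by (rule has_derivative_transform_within_open[OF bounded_linear_imp_has_derivative[OF bl] open_ball x])
         (simp add: restrB_def)
    thus "\<exists>D. (restrB L has_derivative D) (at x) \<and> (\<forall>c y. D (cscale J c y) = c * D y)"
      using sc by blast
  qed
  moreover have "bounded (restrB L ` unitB)"
    unfolding bounded_iff
  proof (intro exI[of _ "max K 0"] ballI)
    fix y assume "y \<in> restrB L ` unitB"
    then obtain x where x: "x \<in> unitB" "y = L x" using eq by auto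
    have "cmod (L x) \<le> K * norm x" by (rule K)
    also have "\<dots> \<le> max K 0 * norm x" by (intro mult_right_mono) auto
    also have "\<dots> \<le> max K 0" using x by (intro mult_left_le) auto
    finally show "norm y \<le> max K 0" using x by simp
  qed
  moreover have "\<forall>x. x \<notin> unitB \<longrightarrow> restrB L x = 0" by (simp add: restrB_def)
  moreover have "uniformly_continuous_on unitB (restrB L)"
  proof -
    have "uniformly_continuous_on unitB L"
      using bounded_linear.uniformly_continuous_on[OF bl uniformly_continuous_on_id] by simp
    thus ?thesis unfolding uniformly_continuous_on_def using eq by metis
  qed
  ultimately show ?thesis unfolding Au_def Hinf_def by auto
qed

lemma key_ultra:
  assumes UA: "uniform_algebra_between J H"
    and fH: "f \<in> H"
    and c: "\<forall>\<tau>\<in>fiber J H \<Phi>. gelfand f \<tau> = c"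
    and U: "ultra U" and ev: "eventually (\<lambda>x. x \<in> unitB) U"
    and lim: "\<forall>L\<in>cdual J. (L \<longlongrightarrow> \<Phi> L) U"
  shows "(f \<longlongrightarrow> c) U"
proof -
  have nb: "U \<noteq> bot" using U by (simp add: ultra_def)
  from UA have AuH: "Au J \<subseteq> H" and HH: "H \<subseteq> Hinf J"
    and cl: "\<forall>f\<in>H. \<forall>g\<in>H. (\<lambda>x. f x + g x) \<in> H \<and> (\<lambda>x. f x * g x) \<in> H"
    and sm: "\<forall>c. \<forall>f\<in>H. (\<lambda>x. c * f x) \<in> H"
    and one: "restrB (\<lambda>_. 1) \<in> H"
    unfolding uniform_algebra_between_def by auto
  define \<tau> where "\<tau> g = (if g \<in> H then Lim U g else 0)" for g
  have conv: "(g \<longlongrightarrow> \<tau> g) U" if "g \<in> H" for g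
  proof -
    have "bounded (g ` unitB)" using that HH unfolding Hinf_def by auto
    then obtain l where "(g \<longlongrightarrow> l) U" using ultra_lim[OF U ev] by blast
    hence "Lim U g = l" using tendsto_Lim[OF nb] by blast
    thus ?thesis using that \<open>(g \<longlongrightarrow> l) U\<close> by (simp add: \<tau>_def)
  qed
  have tv: "\<tau> g = l" if "g \<in> H" "(g \<longlongrightarrow> l) U" for g l
    using tendsto_unique[OF nb conv[OF that(1)] that(2)] .
  have "\<tau> \<in> spectrumH H"
    unfolding spectrumH_def
  proof (intro CollectI conjI ballI allI impI)
    fix g h assume g: "g \<in> H" and h: "h \<in> H"
    show "\<tau> (\<lambda>x. g x + h x) = \<tau> g + \<tau> h"
      using cl g h by (intro tv tendsto_add conv) auto
    show "\<tau> (\<lambda>x. g x * h x) = \<tau> g * \<tau> h"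
      using cl g h by (intro tv tendsto_mult conv) auto
  next
    fix a g assume g: "g \<in> H"
    show "\<tau> (\<lambda>x. a * g x) = a * \<tau> g"
      using sm g by (intro tv tendsto_mult conv tendsto_const) auto
  next
    have "eventually (\<lambda>x. (\<lambda>_. 1) x = restrB (\<lambda>_. 1) x) U"
      using ev by (rule eventually_mono) (simp add: restrB_def)
    hence "(restrB (\<lambda>_. 1) \<longlongrightarrow> 1) U"
      by (rule Lim_transform_eventually[OF tendsto_const])
    thus "\<tau> (restrB (\<lambda>_. 1)) = 1" by (rule tv[OF one])
  next
    fix g assume "g \<notin> H" thus "\<tau> g = 0" by (simp add: \<tau>_def)
  qed
  moreover have "\<forall>L\<in>cdual J. \<tau> (restrB L) = \<Phi> L"
  proof
    fix L assume L: "L \<in> cdual J"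
    have rH: "restrB L \<in> H" using restrB_Au[OF L] AuH by auto
    have "eventually (\<lambda>x. L x = restrB L x) U"
      using ev by (rule eventually_mono) (simp add: restrB_def)
    hence "(restrB L \<longlongrightarrow> \<Phi> L) U"
      by (rule Lim_transform_eventually[OF lim[rule_format, OF L]])
    thus "\<tau> (restrB L) = \<Phi> L" by (rule tv[OF rH])
  qed
  ultimately have "\<tau> \<in> fiber J H \<Phi>" unfolding fiber_def by auto
  hence "\<tau> f = c" using c by (simp add: gelfand_def)
  thus ?thesis using conv[OF fH] by simp
qed

lemma key_filter:
  assumes UA: "uniform_algebra_between J H"
    and fH: "f \<in> H"
    and c: "\<forall>\<tau>\<in>fiber J H \<Phi>. gelfand f \<tau> = c"
    and ev: "eventually (\<lambda>x. x \<in> unitB) F"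
    and lim: "\<forall>L\<in>cdual J. (L \<longlongrightarrow> \<Phi> L) F"
  shows "(f \<longlongrightarrow> c) F"
  unfolding tendsto_def
proof (intro allI impI)
  fix S assume S: "open S" "c \<in> S"
  show "eventually (\<lambda>x. f x \<in> S) F"
  proof (rule ccontr)
    assume ne: "\<not> ?thesis"
    define G where "G = inf F (principal {x. f x \<notin> S})"
    have "G \<noteq> bot" using ne
      by (simp add: G_def trivial_limit_def eventually_inf_principal not_eventually)
    then obtain U where UG: "U \<le> G" and U: "ultra U" using ex_ultra by blast
    have UF: "U \<le> F" using UG by (simp add: G_def le_inf_iff)
    have "(f \<longlongrightarrow> c) U"
    proof (rule key_ultra[OF UA fH c U])
      show "eventually (\<lambda>x. x \<in> unitB) U" using ev UF filter_leD by blast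
      show "\<forall>L\<in>cdual J. (L \<longlongrightarrow> \<Phi> L) U" using lim UF tendsto_mono by blast
    qed
    hence e1: "eventually (\<lambda>x. f x \<in> S) U" using S tendsto_def by blast
    have "eventually (\<lambda>x. f x \<notin> S) G" by (simp add: G_def eventually_inf_principal)
    hence "eventually (\<lambda>x. f x \<notin> S) U" using UG filter_leD by blast
    with e1 have "eventually (\<lambda>x. False) U" by (rule eventually_elim2) auto
    with U show False by (simp add: ultra_def trivial_limit_def)
  qed
qed

theorem mainTheorem3:
  fixes J :: "'a::banach \<Rightarrow> 'a" and H :: "('a \<Rightarrow> complex) set"
    and \<Phi> :: "('a \<Rightarrow> complex) \<Rightarrow> complex" and f :: "'a \<Rightarrow> complex"
  assumes "complex_structure J"
    and "uniform_algebra_between J H"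
    and "\<Phi> \<in> bidual_ball J"
    and "f \<in> H"
    and "\<exists>c. \<forall>\<tau>\<in>fiber J H \<Phi>. gelfand f \<tau> = c"
  shows "\<exists>w. continuous_on unitB f
    \<and> (\<forall>F. eventually (\<lambda>x. x \<in> unitB) F
          \<and> (\<forall>e>0. eventually (\<lambda>x. \<forall>L\<in>cdual J. (\<forall>y. cmod (L y) \<le> norm y)
                                       \<longrightarrow> cmod (L x - \<Phi> L) \<le> e) F)
          \<longrightarrow> (f \<longlongrightarrow> w) F)
    \<and> (\<forall>F. eventually (\<lambda>x. x \<in> unitB) F \<and> (\<forall>L\<in>cdual J. (L \<longlongrightarrow> \<Phi> L) F)
          \<longrightarrow> (f \<longlongrightarrow> w) F)"
proof -
  obtain c where c: "\<forall>\<tau>\<in>fiber J H \<Phi>. gelfand f \<tau> = c" using assms(5) by blast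
  have HH: "H \<subseteq> Hinf J" using assms(2) unfolding uniform_algebra_between_def by auto
  have cont: "continuous_on unitB f"
  proof -
    have "holo J unitB f" using HH assms(4) unfolding Hinf_def by auto
    hence "\<forall>x\<in>unitB. isCont f x" unfolding holo_def using has_derivative_continuous by blast
    thus ?thesis by (simp add: continuous_on_eq_continuous_at)
  qed
  have B: "(f \<longlongrightarrow> c) F" if "eventually (\<lambda>x. x \<in> unitB) F" "\<forall>L\<in>cdual J. (L \<longlongrightarrow> \<Phi> L) F" for F
    using key_filter[OF assms(2) assms(4) c that] .
  have scal: "\<forall>a. \<forall>L\<in>cdual J. \<Phi> (\<lambda>x. a * L x) = a * \<Phi> L"
    using assms(3) unfolding bidual_ball_def by auto
  have A: "(f \<longlongrightarrow> c) F" if ev: "eventually (\<lambda>x. x \<in> unitB) F"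
    and un: "\<forall>e>0. eventually (\<lambda>x. \<forall>L\<in>cdual J. (\<forall>y. cmod (L y) \<le> norm y)
                                       \<longrightarrow> cmod (L x - \<Phi> L) \<le> e) F" for F
  proof (rule B[OF ev], intro ballI)
    fix L assume L: "L \<in> cdual J"
    then obtain K where K: "\<And>x. cmod (L x) \<le> K * norm x" unfolding cdual_def by blast
    define K' where "K' = max K 1"
    have K'pos: "K' > 0" by (simp add: K'_def)
    define L' where "L' = (\<lambda>x. complex_of_real (1/K') * L x)"
    have L'b: "\<forall>y. cmod (L' y) \<le> norm y"
    proof
      fix y
      have h: "cmod (L y) \<le> K' * norm y"
        using K[of y] by (smt (verit) K'_def mult_right_mono norm_ge_zero)
      have "cmod (L' y) = cmod (L y) / K'"
        using K'pos by (simp add: L'_def norm_divide)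
      also have "\<dots> \<le> norm y" using h K'pos by (simp add: divide_le_eq mult.commute)
      finally show "cmod (L' y) \<le> norm y" .
    qed
    have L'd: "L' \<in> cdual J"
    proof -
      have "\<forall>x. cmod (L' x) \<le> 1 * norm x" using L'b by simp
      thus ?thesis using L unfolding cdual_def L'_def
        by (auto simp: algebra_simps add_divide_distrib intro!: exI[of _ 1])
    qed
    have PL': "\<Phi> L' = complex_of_real (1/K') * \<Phi> L" unfolding L'_def using scal L by blast
    have diff: "L x - \<Phi> L = complex_of_real K' * (L' x - \<Phi> L')" for x
    proof -
      have "L' x = complex_of_real (1/K') * L x" by (simp add: L'_def)
      thus ?thesis using K'pos PL' by (simp add: field_simps)
    qed
    show "(L \<longlongrightarrow> \<Phi> L) F"
      unfolding tendsto_iff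
    proof (intro allI impI)
      fix e :: real assume e: "e > 0"
      have "eventually (\<lambda>x. cmod (L' x - \<Phi> L') \<le> e / (2*K')) F"
        using un[rule_format, of "e/(2*K')"] e K'pos L'd L'b
        by (auto elim!: eventually_mono)
      thus "eventually (\<lambda>x. dist (L x) (\<Phi> L) < e) F"
      proof (rule eventually_mono)
        fix x assume h: "cmod (L' x - \<Phi> L') \<le> e / (2*K')"
        have "dist (L x) (\<Phi> L) = K' * cmod (L' x - \<Phi> L')"
          using K'pos by (simp add: dist_norm diff norm_mult)
        also have "\<dots> \<le> K' * (e / (2*K'))" using h K'pos by (intro mult_left_mono) auto
        also have "\<dots> < e" using K'pos e by (simp add: field_simps)
        finally show "dist (L x) (\<Phi> L) < e" .
      qed
    qed
  qed
  show ?thesis using cont A B by blast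
qed

end
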